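(* Let $\Phi$ be a satisfiable 2-CNF and $\mathcal L_0$ any set of literals. Let $\Phi-\mathcal C(\Phi,\mathcal L_0)$ denote the formula obtained from $\Phi$ by deleting the clauses in $\mathcal C(\Phi,\mathcal L_0)$. Then $$Z\big(\Phi-\mathcal C(\Phi,\mathcal L_0)\big)\le 2^{|\mathcal V(\Phi,\mathcal L_0)|\cdot\mathbb 1\{\mathcal C(\Phi,\mathcal L_0)\ne\emptyset\}}\,Z(\Phi).$$
   Context: A 2-CNF is a conjunction of clauses, each the disjunction of two literals on two distinct variables. $Z(\cdot)$ is the number of satisfying assignments. For a literal $l$, $|l|$ denotes its underlying variable. $\mathcal L(\Phi,\mathcal L_0)$ is the output of Unit Clause Propagation: start from $\mathcal L=\mathcal L_0$ and, while $\Phi$ has a clause $l\vee\neg l'$ with $l'\in\mathcal L$ and $l\notin\mathcal L$, add $l$. Then: - $\mathcal V(\Phi,\mathcal L_0)=\{|l|:l\in\mathcal L(\Phi,\mathcal L_0)\}$; - $\mathcal V_0(\Phi,\mathcal L_0)$ is the set of $x$ with both $x,\neg x\in\mathcal L(\Phi,\mathcal L_0)$; - $\mathcal C(\Phi,\mathcal L_0)$ is the set of clauses of $\Phi$ all of whose variables lie in $\mathcal V_0(\Phi,\mathcal L_0)$. *)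

theory Defs
  imports Main
begin

datatype 'v lit = Pos 'v | Neg 'v

fun var :: "'v lit \<Rightarrow> 'v" where
  "var (Pos x) = x" | "var (Neg x) = x"

fun neg :: "'v lit \<Rightarrow> 'v lit" where
  "neg (Pos x) = Neg x" | "neg (Neg x) = Pos x"

type_synonym 'v clause = "'v lit \<times> 'v lit"
type_synonym 'v cnf = "'v clause set"

definition clause_lits :: "'v clause \<Rightarrow> 'v lit set" where
  "clause_lits c = {fst c, snd c}"

definition is_2cnf :: "'v cnf \<Rightarrow> bool" where
  "is_2cnf \<Phi> \<longleftrightarrow> (\<forall>c\<in>\<Phi>. var (fst c) \<noteq> var (snd c))"

fun lit_val :: "('v \<Rightarrow> bool) \<Rightarrow> 'v lit \<Rightarrow> bool" where
  "lit_val \<sigma> (Pos x) = \<sigma> x" | "lit_val \<sigma> (Neg x) = (\<not> \<sigma> x)"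

definition sat :: "('v \<Rightarrow> bool) \<Rightarrow> 'v cnf \<Rightarrow> bool" where
  "sat \<sigma> \<Phi> \<longleftrightarrow> (\<forall>c\<in>\<Phi>. lit_val \<sigma> (fst c) \<or> lit_val \<sigma> (snd c))"

definition Z :: "('v::finite) cnf \<Rightarrow> nat" where
  "Z \<Phi> = card {\<sigma> :: 'v \<Rightarrow> bool. sat \<sigma> \<Phi>}"

text \<open>Output of unit clause propagation: the least superset of L0 closed under
  adding l whenever some clause is l \<or> \<not>l' with l' already present.\<close>
inductive_set ucp :: "'v cnf \<Rightarrow> 'v lit set \<Rightarrow> 'v lit set" for \<Phi> L0 where
  base: "l \<in> L0 \<Longrightarrow> l \<in> ucp \<Phi> L0"
| step: "c \<in> \<Phi> \<Longrightarrow> clause_lits c = {l, neg l'} \<Longrightarrow> l' \<in> ucp \<Phi> L0 \<Longrightarrow> l \<in> ucp \<Phi> L0"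

definition ucpV :: "'v cnf \<Rightarrow> 'v lit set \<Rightarrow> 'v set" where
  "ucpV \<Phi> L0 = var ` ucp \<Phi> L0"

definition ucpV0 :: "'v cnf \<Rightarrow> 'v lit set \<Rightarrow> 'v set" where
  "ucpV0 \<Phi> L0 = {x. Pos x \<in> ucp \<Phi> L0 \<and> Neg x \<in> ucp \<Phi> L0}"

definition ucpC :: "'v cnf \<Rightarrow> 'v lit set \<Rightarrow> 'v cnf" where
  "ucpC \<Phi> L0 = {c \<in> \<Phi>. var (fst c) \<in> ucpV0 \<Phi> L0 \<and> var (snd c) \<in> ucpV0 \<Phi> L0}"

end

theory Submission
  imports Defs
begin

lemma ucp_clause:
  assumes "c \<in> \<Phi>" "neg (fst c) \<in> ucp \<Phi> L0"
  shows "snd c \<in> ucp \<Phi> L0"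
proof -
  have "clause_lits c = {snd c, neg (neg (fst c))}"
    by (cases "fst c") (auto simp: clause_lits_def)
  thus ?thesis using ucp.step[OF assms(1) _ assms(2)] by blast
qed

lemma ucp_clause':
  assumes "c \<in> \<Phi>" "neg (snd c) \<in> ucp \<Phi> L0"
  shows "fst c \<in> ucp \<Phi> L0"
proof -
  have "clause_lits c = {fst c, neg (neg (snd c))}"
    by (cases "snd c") (auto simp: clause_lits_def)
  thus ?thesis using ucp.step[OF assms(1) _ assms(2)] by blast
qed

lemma var_neg[simp]: "var (neg a) = var a"
  by (cases a) auto

lemma lit_in_V:
  assumes "var a \<in> var ` L"
  shows "a \<in> L \<or> neg a \<in> L"
proof -
  obtain l where l: "l \<in> L" "var l = var a" using assms by (metis imageE)
  show ?thesis using l by (cases a; cases l) auto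
qed

lemma lit_true:
  assumes "a \<in> L" "\<not> (Pos (var a) \<in> L \<and> Neg (var a) \<in> L)"
  shows "lit_val (\<lambda>x. Pos x \<in> L) a"
  using assms by (cases a) auto

theorem lemma5p1:
  fixes \<Phi> :: "('v::finite) cnf" and L0 :: "'v lit set"
  assumes "is_2cnf \<Phi>"
    and "\<exists>\<sigma>. sat \<sigma> \<Phi>"
  shows "Z (\<Phi> - ucpC \<Phi> L0)
           \<le> 2 ^ (card (ucpV \<Phi> L0) * (if ucpC \<Phi> L0 \<noteq> {} then 1 else 0)) * Z \<Phi>"
proof (cases "ucpC \<Phi> L0 = {}")
  case True
  then show ?thesis by simp
next
  case False
  obtain \<tau>0 where t0: "sat \<tau>0 \<Phi>" using assms(2) by blast
  define L where "L = ucp \<Phi> L0"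
  define V where "V = ucpV \<Phi> L0"
  define V0 where "V0 = ucpV0 \<Phi> L0"
  have V: "V = var ` L" unfolding V_def L_def ucpV_def by simp
  have V0: "V0 = {x. Pos x \<in> L \<and> Neg x \<in> L}" unfolding V0_def L_def ucpV0_def by simp
  have V0V: "V0 \<subseteq> V" unfolding V0 V by force
  have stepA: "\<And>c. c \<in> \<Phi> \<Longrightarrow> neg (fst c) \<in> L \<Longrightarrow> snd c \<in> L"
    unfolding L_def by (rule ucp_clause)
  have stepB: "\<And>c. c \<in> \<Phi> \<Longrightarrow> neg (snd c) \<in> L \<Longrightarrow> fst c \<in> L"
    unfolding L_def by (rule ucp_clause')
  have inV0: "\<And>a. var a \<in> V0 \<longleftrightarrow> a \<in> L \<and> neg a \<in> L"
    unfolding V0 by (case_tac a) auto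
  define f where "f \<sigma> = (\<lambda>x. if x \<in> V0 then \<tau>0 x else if x \<in> V then Pos x \<in> L else \<sigma> x)"
    for \<sigma> :: "'v \<Rightarrow> bool"
  define S where "S = {\<sigma> :: 'v \<Rightarrow> bool. sat \<sigma> (\<Phi> - ucpC \<Phi> L0)}"
  define T where "T = {\<sigma> :: 'v \<Rightarrow> bool. sat \<sigma> \<Phi>}"
  have lv: "lit_val (f \<sigma>) a = (if var a \<in> V0 then lit_val \<tau>0 a else if var a \<in> V
      then lit_val (\<lambda>x. Pos x \<in> L) a else lit_val \<sigma> a)" for \<sigma> a
    by (cases a) (auto simp: f_def)
  have fT: "f \<sigma> \<in> T" if "\<sigma> \<in> S" for \<sigma>
    unfolding T_def sat_def mem_Collect_eq
  proof (intro ballI)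
    fix c assume c: "c \<in> \<Phi>"
    obtain a b where ab: "c = (a, b)" by (cases c)
    have cA: "neg a \<in> L \<Longrightarrow> b \<in> L" using stepA[OF c] ab by simp
    have cB: "neg b \<in> L \<Longrightarrow> a \<in> L" using stepB[OF c] ab by simp
    have tA: "a \<in> L \<Longrightarrow> var a \<notin> V0 \<Longrightarrow> lit_val (\<lambda>x. Pos x \<in> L) a"
      by (rule lit_true) (auto simp: V0)
    have tB: "b \<in> L \<Longrightarrow> var b \<notin> V0 \<Longrightarrow> lit_val (\<lambda>x. Pos x \<in> L) b"
      by (rule lit_true) (auto simp: V0)
    have LV: "l \<in> L \<Longrightarrow> var l \<in> V" for l unfolding V by blast
    have VL: "var l \<in> V \<Longrightarrow> l \<in> L \<or> neg l \<in> L" for l unfolding V by (rule lit_in_V)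
    show "lit_val (f \<sigma>) (fst c) \<or> lit_val (f \<sigma>) (snd c)"
    proof (cases "var a \<in> V0 \<and> var b \<in> V0")
      case True
      then show ?thesis using t0 c ab by (auto simp: lv sat_def)
    next
      case nb: False
      show ?thesis
      proof (cases "var a \<in> V \<or> var b \<in> V")
        case False
        have "c \<in> \<Phi> - ucpC \<Phi> L0" using c nb ab by (auto simp: ucpC_def V0_def)
        moreover have "\<forall>c\<in>\<Phi> - ucpC \<Phi> L0. lit_val \<sigma> (fst c) \<or> lit_val \<sigma> (snd c)"
          using that by (simp add: S_def sat_def)
        ultimately have "lit_val \<sigma> (fst c) \<or> lit_val \<sigma> (snd c)" by blast
        then have "lit_val \<sigma> a \<or> lit_val \<sigma> b" using ab by simp
        then show ?thesis using False V0V ab by (auto simp: lv)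
      next
        case True
        show ?thesis
        proof (cases "var a \<in> V0")
          case a0: True
          then have "var b \<notin> V0" using nb by blast
          then have "b \<in> L" using a0 cA inV0[of a] by blast
          then show ?thesis using tB \<open>var b \<notin> V0\<close> LV ab by (auto simp: lv)
        next
          case a0: False
          show ?thesis
          proof (cases "var b \<in> V0")
            case b0: True
            then have "a \<in> L" using b0 cB inV0[of b] by blast
            then show ?thesis using tA a0 LV ab by (auto simp: lv)
          next
            case b0: False
            show ?thesis
            proof (cases "a \<in> L")
              case True
              then show ?thesis using tA a0 LV ab by (auto simp: lv)
            next
              case False
              then have "var a \<in> V \<Longrightarrow> neg a \<in> L" using VL by blast
              moreover have "var a \<notin> V \<Longrightarrow> var b \<in> V" using \<open>var a \<in> V \<or> var b \<in> V\<close> by blast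
              moreover have "var b \<in> V \<Longrightarrow> b \<in> L" using VL cB False by blast
              ultimately have "b \<in> L" using cA by blast
              then show ?thesis using tB b0 LV ab by (auto simp: lv)
            qed
          qed
        qed
      qed
    qed
  qed
  define F where "F t = {\<sigma> \<in> S. f \<sigma> = t}" for t
  have SU: "S \<subseteq> (\<Union>t\<in>T. F t)" using fT unfolding F_def by blast
  have Fc: "card (F t) \<le> 2 ^ card V" for t
  proof -
    have "inj_on (\<lambda>\<sigma>. {x \<in> V. \<sigma> x}) (F t)"
    proof (rule inj_onI)
      fix s1 s2 assume s: "s1 \<in> F t" "s2 \<in> F t" and e: "{x \<in> V. s1 x} = {x \<in> V. s2 x}"
      show "s1 = s2"
      proof
        fix x
        show "s1 x = s2 x"
        proof (cases "x \<in> V")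
          case True
          from e have "x \<in> {x \<in> V. s1 x} \<longleftrightarrow> x \<in> {x \<in> V. s2 x}" by simp
          then show ?thesis using True by simp
        next
          case False
          have "f s1 x = f s2 x" using s by (simp add: F_def)
          moreover have "x \<notin> V0" using False V0V by blast
          ultimately show ?thesis using False by (simp add: f_def)
        qed
      qed
    qed
    moreover have "(\<lambda>\<sigma>. {x \<in> V. \<sigma> x}) ` F t \<subseteq> Pow V" by blast
    ultimately have "card (F t) \<le> card (Pow V)"
      by (meson card_inj_on_le finite_Pow_iff finite)
    then show ?thesis by (simp add: card_Pow)
  qed
  have "card S \<le> card (\<Union>t\<in>T. F t)" using SU by (intro card_mono) auto
  also have "\<dots> \<le> (\<Sum>t\<in>T. card (F t))" by (rule card_UN_le) simp
  also have "\<dots> \<le> (\<Sum>t\<in>T. 2 ^ card V)" by (rule sum_mono) (rule Fc)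
  also have "\<dots> = 2 ^ card V * card T" by simp
  finally show ?thesis using False by (simp add: Z_def S_def T_def V_def)
qed

end
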